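(* Let $(i,k)\in\mathcal I_1$. Then $F_{st}F_{\ge(i,k)}=0$ for every $(s,t)\in\mathcal I_1$ with $(s,t)\succeq(i,k)$; equivalently, $F_{st}F_{>(i,k)}=0$ for every $(s,t)\in\mathcal I_1$ with $(s,t)\succ(i,k)$.
   Context: Let $m,n\ge 1$, let $q$ be an indeterminate, and let indices range over $[1,m+n]$. Put $q_i=q$ if $i\le m$ and $q_i=q^{-1}$ if $i>m$. Let $\mathcal I_0=\{(i,j):1\le i<j\le m \text{ or } m+1\le i<j\le m+n\}$, $\mathcal I_1=\{(i,j):1\le i\le m<j\le m+n\}$. The quantum supergroup $U_q=U_q(\mathfrak{gl}(m|n))$ is the associative $\mathbb C(q)$-superalgebra generated by $K_j^{\pm1}$ ($j\in[1,m+n]$) and $E_{i,i+1},F_{i,i+1}$ ($1\le i<m+n$), where $K_j^{\pm1}$ and $E_{i,i+1},F_{i,i+1}$ for $i\ne m$ are even and $E_{m,m+1},F_{m,m+1}$ are odd, subject to: $K_iK_j=K_jK_i$, $K_iK_i^{-1}=1$; $K_iE_{j,j+1}K_i^{-1}=q_i^{\delta_{ij}-\delta_{i,j+1}}E_{j,j+1}$, $K_iF_{j,j+1}K_i^{-1}=q_i^{-(\delta_{ij}-\delta_{i,j+1})}F_{j,j+1}$; $[E_{i,i+1},F_{j,j+1}]=\delta_{ij}\frac{K_iK_{i+1}^{-1}-K_i^{-1}K_{i+1}}{q_i-q_i^{-1}}$; $E_{m,m+1}^2=F_{m,m+1}^2=0$; $E_{i,i+1}E_{j,j+1}=E_{j,j+1}E_{i,i+1}$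 and $F_{i,i+1}F_{j,j+1}=F_{j,j+1}F_{i,i+1}$ for $|i-j|>1$; for $|i-j|=1$, $i\neq m$, and $X\in\{E,F\}$: $X_{i,i+1}^2X_{j,j+1}-(q+q^{-1})X_{i,i+1}X_{j,j+1}X_{i,i+1}+X_{j,j+1}X_{i,i+1}^2=0$; and $[E_{m-1,m+2},E_{m,m+1}]=[F_{m-1,m+2},F_{m,m+1}]=0$. Here for homogeneous $x,y$, $[x,y]=xy-(-1)^{\bar x\bar y}yx$. For $i<j$ with $j>i+1$, $E_{ij}=E_{ic}E_{cj}-q_c^{-1}E_{cj}E_{ic}$ and $F_{ij}=-q_cF_{ic}F_{cj}+F_{cj}F_{ic}$ for $i<c<j$ (independent of $c$); $E_{ij},F_{ij}$ are odd iff $(i,j)\in\mathcal I_1$. Order on $\mathcal I_1$: $(i,j)\prec(s,t)$ iff $j>t$, or $j=t$ and $i<s$. For $I\subseteq\mathcal I_1$, $F_I$ is the product of the $F_{ij}$, $(i,j)\in I$, taken in increasing $\prec$-order ($F_\emptyset=1$). For $(i,j)\in\mathcal I_1$, $F_{\ge(i,j)}$, $F_{>(i,j)}$, $F_{\le(i,j)}$, $F_{<(i,j)}$ denote $F_I$ for $I=\{(s,t)\in\mathcal I_1:(s,t)\succeq(i,j)\}$, $\{(s,t):(s,t)\succ(i,j)\}$, $\{(s,t):(s,t)\preceq(i,j)\}$, $\{(s,t):(s,t)\prec(i,j)\}$ respectively. *)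

theory Defs
  imports Complex_Main "HOL-Computational_Algebra.Polynomial" "HOL-Computational_Algebra.Fraction_Field"
begin

text \<open>The base field C(q): fractions of complex polynomials; q is the indeterminate.\<close>
type_synonym cq = "complex poly fract"

definition qf :: cq where "qf = Fract [:0, 1:] 1"

definition qidx :: "nat \<Rightarrow> nat \<Rightarrow> cq" where
  "qidx m i = (if i \<le> m then qf else inverse qf)"

text \<open>q_i ^ (delta_{ij} - delta_{i,j+1}).\<close>
definition kexp :: "nat \<Rightarrow> nat \<Rightarrow> nat \<Rightarrow> cq" where
  "kexp m i j = (if i = j then qidx m i else if i = Suc j then inverse (qidx m i) else 1)"

text \<open>An associative unital C(q)-algebra structure on a ring: a unital ring
  homomorphism from C(q) into the centre.\<close>
definition central_hom :: "(cq \<Rightarrow> 'a::ring_1) \<Rightarrow> bool" where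
  "central_hom \<phi> \<longleftrightarrow> \<phi> 1 = 1 \<and> (\<forall>a b. \<phi> (a + b) = \<phi> a + \<phi> b)
     \<and> (\<forall>a b. \<phi> (a * b) = \<phi> a * \<phi> b) \<and> (\<forall>c x. \<phi> c * x = x * \<phi> c)"

text \<open>Root vectors: Ed \<phi> m E i d = E_{i,i+d+1}, built with c = i+1.
  E i stands for E_{i,i+1}.\<close>
primrec Ed :: "(cq \<Rightarrow> 'a::ring_1) \<Rightarrow> nat \<Rightarrow> (nat \<Rightarrow> 'a) \<Rightarrow> nat \<Rightarrow> nat \<Rightarrow> 'a" where
  "Ed \<phi> m E i 0 = E i"
| "Ed \<phi> m E i (Suc d) = E i * Ed \<phi> m E (Suc i) d
      - \<phi> (inverse (qidx m (Suc i))) * Ed \<phi> m E (Suc i) d * E i"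

primrec Fd :: "(cq \<Rightarrow> 'a::ring_1) \<Rightarrow> nat \<Rightarrow> (nat \<Rightarrow> 'a) \<Rightarrow> nat \<Rightarrow> nat \<Rightarrow> 'a" where
  "Fd \<phi> m F i 0 = F i"
| "Fd \<phi> m F i (Suc d) = - (\<phi> (qidx m (Suc i)) * F i * Fd \<phi> m F (Suc i) d)
      + Fd \<phi> m F (Suc i) d * F i"

definition Eij :: "(cq \<Rightarrow> 'a::ring_1) \<Rightarrow> nat \<Rightarrow> (nat \<Rightarrow> 'a) \<Rightarrow> nat \<Rightarrow> nat \<Rightarrow> 'a" where
  "Eij \<phi> m E i j = Ed \<phi> m E i (j - i - 1)"

definition Fij :: "(cq \<Rightarrow> 'a::ring_1) \<Rightarrow> nat \<Rightarrow> (nat \<Rightarrow> 'a) \<Rightarrow> nat \<Rightarrow> nat \<Rightarrow> 'a" where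
  "Fij \<phi> m F i j = Fd \<phi> m F i (j - i - 1)"

definition serre :: "(cq \<Rightarrow> 'a::ring_1) \<Rightarrow> (nat \<Rightarrow> 'a) \<Rightarrow> nat \<Rightarrow> nat \<Rightarrow> 'a" where
  "serre \<phi> X i j = X i * X i * X j - \<phi> (qf + inverse qf) * (X i * X j * X i) + X j * X i * X i"

text \<open>The defining relations of U_q(gl(m|n)) for elements K_j, K_j^{-1} (Ki), E_{i,i+1} (E i),
  F_{i,i+1} (F i) of a C(q)-algebra; super brackets written out with their signs.\<close>
definition Uq_rels :: "nat \<Rightarrow> nat \<Rightarrow> (cq \<Rightarrow> 'a::ring_1) \<Rightarrow> (nat \<Rightarrow> 'a) \<Rightarrow> (nat \<Rightarrow> 'a)
    \<Rightarrow> (nat \<Rightarrow> 'a) \<Rightarrow> (nat \<Rightarrow> 'a) \<Rightarrow> bool" where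
  "Uq_rels m n \<phi> K Ki E F \<longleftrightarrow>
     (\<forall>i\<in>{1..m+n}. \<forall>j\<in>{1..m+n}. K i * K j = K j * K i)
   \<and> (\<forall>i\<in>{1..m+n}. K i * Ki i = 1 \<and> Ki i * K i = 1)
   \<and> (\<forall>i\<in>{1..m+n}. \<forall>j\<in>{1..<m+n}.
        K i * E j * Ki i = \<phi> (kexp m i j) * E j
      \<and> K i * F j * Ki i = \<phi> (inverse (kexp m i j)) * F j)
   \<and> (\<forall>i\<in>{1..<m+n}. \<forall>j\<in>{1..<m+n}.
        E i * F j - (if i = m \<and> j = m then -1 else 1) * (F j * E i)
        = (if i = j then \<phi> (inverse (qidx m i - inverse (qidx m i)))
                         * (K i * Ki (Suc i) - Ki i * K (Suc i)) else 0))
   \<and> E m * E m = 0 \<and> F m * F m = 0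
   \<and> (\<forall>i\<in>{1..<m+n}. \<forall>j\<in>{1..<m+n}. (Suc i < j \<or> Suc j < i) \<longrightarrow>
        E i * E j = E j * E i \<and> F i * F j = F j * F i)
   \<and> (\<forall>i\<in>{1..<m+n}. \<forall>j\<in>{1..<m+n}. (j = Suc i \<or> i = Suc j) \<and> i \<noteq> m \<longrightarrow>
        serre \<phi> E i j = 0 \<and> serre \<phi> F i j = 0)
   \<and> (2 \<le> m \<and> 2 \<le> n \<longrightarrow>
        Eij \<phi> m E (m - 1) (m + 2) * E m + E m * Eij \<phi> m E (m - 1) (m + 2) = 0
      \<and> Fij \<phi> m F (m - 1) (m + 2) * F m + F m * Fij \<phi> m F (m - 1) (m + 2) = 0)"

definition I1 :: "nat \<Rightarrow> nat \<Rightarrow> (nat \<times> nat) set" where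
  "I1 m n = {(i, j). 1 \<le> i \<and> i \<le> m \<and> m < j \<and> j \<le> m + n}"

definition prec :: "nat \<times> nat \<Rightarrow> nat \<times> nat \<Rightarrow> bool" where
  "prec p r \<longleftrightarrow> snd p > snd r \<or> (snd p = snd r \<and> fst p < fst r)"

definition preceq :: "nat \<times> nat \<Rightarrow> nat \<times> nat \<Rightarrow> bool" where
  "preceq p r \<longleftrightarrow> p = r \<or> prec p r"

definition I1_list :: "nat \<Rightarrow> nat \<Rightarrow> (nat \<times> nat) list" where
  "I1_list m n = concat (map (\<lambda>j. map (\<lambda>i. (i, j)) [1..<Suc m]) (rev [Suc m..<Suc (m + n)]))"

definition FI :: "nat \<Rightarrow> nat \<Rightarrow> (cq \<Rightarrow> 'a::ring_1) \<Rightarrow> (nat \<Rightarrow> 'a) \<Rightarrow> (nat \<times> nat) set \<Rightarrow> 'a" where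
  "FI m n \<phi> F I = prod_list (map (\<lambda>(i, j). Fij \<phi> m F i j) (filter (\<lambda>p. p \<in> I) (I1_list m n)))"

definition Fge :: "nat \<Rightarrow> nat \<Rightarrow> (cq \<Rightarrow> 'a::ring_1) \<Rightarrow> (nat \<Rightarrow> 'a) \<Rightarrow> nat \<times> nat \<Rightarrow> 'a" where
  "Fge m n \<phi> F p = FI m n \<phi> F {r \<in> I1 m n. preceq p r}"

definition Fgt :: "nat \<Rightarrow> nat \<Rightarrow> (cq \<Rightarrow> 'a::ring_1) \<Rightarrow> (nat \<Rightarrow> 'a) \<Rightarrow> nat \<times> nat \<Rightarrow> 'a" where
  "Fgt m n \<phi> F p = FI m n \<phi> F {r \<in> I1 m n. prec p r}"

end

theory Submission
  imports Defs
begin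

lemma qf_nz: "qf \<noteq> 0"
  unfolding qf_def Zero_fract_def by (simp add: eq_fract)

lemma qf2_nz: "qf + inverse qf \<noteq> 0"
proof
  assume h: "qf + inverse qf = 0"
  hence "qf * qf + 1 = 0" using qf_nz by (simp add: field_simps)
  hence "Fract ([:0,1:] * [:0,1:] + 1) 1 = Fract 0 (1::complex poly)"
    unfolding qf_def Zero_fract_def One_fract_def by simp
  hence "[:0,1:] * [:0,1:] + 1 = (0 :: complex poly)" by (simp add: eq_fract)
  hence "coeff ([:0,1:] * [:0,1:] + 1) 2 = coeff (0 :: complex poly) 2" by simp
  thus False by (simp add: coeff_mult numeral_2_eq_2)
qed

lemma qq1: "qf * (inverse qf * z) = z" "inverse qf * (qf * z) = z" "qf * inverse qf = 1" "inverse qf * qf = 1"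
  using qf_nz by (simp_all add: mult.assoc[symmetric])

lemma X_induct[consumes 1, case_names base step]:
  assumes "i < j" and "\<And>i. P i (Suc i)" and "\<And>i j. Suc i < j \<Longrightarrow> P (Suc i) j \<Longrightarrow> P i j"
  shows "P i j"
proof -
  have "\<And>i. j = i + Suc d \<Longrightarrow> P i j" for d
  proof (induction d)
    case 0 then show ?case using assms(2) by simp
  next
    case (Suc d)
    then have "Suc i < j" "j = Suc i + Suc d" by simp_all
    then show ?case using Suc.IH assms(3) by blast
  qed
  moreover have "j = i + Suc (j - i - 1)" using assms(1) by simp
  ultimately show ?thesis by blast
qed

locale Fsys =
  fixes \<phi> :: "cq \<Rightarrow> 'a::ring_1" and m n :: nat and F :: "nat \<Rightarrow> 'a"
  assumes hom: "central_hom \<phi>"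
    and mpos: "1 \<le> m" and npos: "1 \<le> n"
    and Fcomm0: "\<And>i j. 1 \<le> i \<Longrightarrow> i < m+n \<Longrightarrow> 1 \<le> j \<Longrightarrow> j < m+n \<Longrightarrow> Suc i < j \<Longrightarrow> F i * F j = F j * F i"
    and Fsq: "F m * F m = 0"
    and Fser: "\<And>i j. 1 \<le> i \<Longrightarrow> i < m+n \<Longrightarrow> 1 \<le> j \<Longrightarrow> j < m+n \<Longrightarrow> j = Suc i \<or> i = Suc j \<Longrightarrow> i \<noteq> m \<Longrightarrow> serre \<phi> F i j = 0"
    and Fquart: "2 \<le> m \<Longrightarrow> 2 \<le> n \<Longrightarrow> Fij \<phi> m F (m-1) (m+2) * F m + F m * Fij \<phi> m F (m-1) (m+2) = 0"
begin

lemma phi_add: "\<phi> (a + b) = \<phi> a + \<phi> b" using hom unfolding central_hom_def by blast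
lemma phi_mult: "\<phi> (a * b) = \<phi> a * \<phi> b" using hom unfolding central_hom_def by blast
lemma phi_one: "\<phi> 1 = 1" using hom unfolding central_hom_def by blast
lemma phi_central: "\<phi> c * x = x * \<phi> c" using hom unfolding central_hom_def by blast
lemma phi_zero: "\<phi> 0 = 0" using phi_add[of 0 0] by simp
lemma phi_minus: "\<phi> (- a) = - \<phi> a" using phi_add[of a "-a"] phi_zero by (simp add: eq_neg_iff_add_eq_0 add.commute)
lemma phi_diff: "\<phi> (a - b) = \<phi> a - \<phi> b" using phi_add[of a "-b"] phi_minus by simp

definition sm :: "cq \<Rightarrow> 'a \<Rightarrow> 'a" where "sm c x = \<phi> c * x"

lemma sm_simps:
  "x * sm c y = sm c (x * y)" "sm c x * y = sm c (x * y)" "sm c (sm d x) = sm (c * d) x"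
  "sm c (x + y) = sm c x + sm c y" "sm c (x - y) = sm c x - sm c y" "sm c (- x) = - sm c x"
  "sm (c + d) x = sm c x + sm d x" "sm 1 x = x" "sm c 0 = 0" "sm (c - d) x = sm c x - sm d x"
  unfolding sm_def
  subgoal by (metis mult.assoc phi_central)
  subgoal by (simp add: mult.assoc)
  subgoal by (simp add: mult.assoc phi_mult)
  subgoal by (simp add: distrib_left)
  subgoal by (simp add: right_diff_distrib)
  subgoal by simp
  subgoal by (simp add: phi_add distrib_right)
  subgoal by (simp add: phi_one)
  subgoal by simp
  subgoal by (simp add: phi_diff left_diff_distrib)
  done

lemma sm_m1: "sm (-1) x = - x" unfolding sm_def by (simp add: phi_minus phi_one)

lemma tl: fixes a b c y :: 'a assumes "a * b = c" shows "a * (b * y) = c * y"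
  by (simp add: assms[symmetric] mult.assoc)

lemmas nf = algebra_simps sm_simps qq1 mult_ac

abbreviation X where "X i j \<equiv> Fij \<phi> m F i j"

lemma X_base: "X i (Suc i) = F i" unfolding Fij_def by simp

lemma X_rec: "Suc i < j \<Longrightarrow> X i j = X (Suc i) j * F i - sm (qidx m (Suc i)) (F i * X (Suc i) j)"
proof -
  assume "Suc i < j"
  then have "j - i - 1 = Suc (j - Suc i - 1)" by simp
  then show ?thesis unfolding Fij_def sm_def by (simp add: algebra_simps mult.assoc)
qed

lemma qidx_le: "k \<le> m \<Longrightarrow> qidx m k = qf" unfolding qidx_def by simp
lemma qidx_gt: "m < k \<Longrightarrow> qidx m k = inverse qf" unfolding qidx_def by simp

lemma Fcomm: "1 \<le> a \<Longrightarrow> a < m+n \<Longrightarrow> 1 \<le> b \<Longrightarrow> b < m+n \<Longrightarrow> Suc a < b \<or> Suc b < a \<Longrightarrow> F a * F b = F b * F a"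
  using Fcomm0 by metis

lemma L0: "i < j \<Longrightarrow> 1 \<le> i \<Longrightarrow> j \<le> m+n \<Longrightarrow> 1 \<le> a \<Longrightarrow> a < m+n \<Longrightarrow> Suc a < i \<or> j < a \<Longrightarrow> F a * X i j = X i j * F a"
proof (induction i j rule: X_induct)
  case (base i) then show ?case by (auto simp: X_base intro!: Fcomm)
next
  case (step i j)
  have c1: "F a * F i = F i * F a" using step by (intro Fcomm) auto
  have c2: "F a * X (Suc i) j = X (Suc i) j * F a" using step by auto
  show ?case unfolding X_rec[OF step(1)]
    using c1 c2 tl[OF c1] tl[OF c2] by (simp add: nf)
qed

lemma LC: "i < j \<Longrightarrow> (\<And>a. i \<le> a \<Longrightarrow> a < j \<Longrightarrow> F a * Y = Y * F a) \<Longrightarrow> X i j * Y = Y * X i j"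
proof (induction i j rule: X_induct)
  case (base i) then show ?case by (simp add: X_base)
next
  case (step i j)
  have c1: "F i * Y = Y * F i" using step by auto
  have c2: "X (Suc i) j * Y = Y * X (Suc i) j" using step by auto
  show ?case unfolding X_rec[OF step(1)]
    using c1 c2 tl[OF c1] tl[OF c2] by (simp add: nf)
qed

lemma LN: "i < j \<Longrightarrow> i \<le> m \<Longrightarrow> m < j \<Longrightarrow> (\<And>a. i \<le> a \<Longrightarrow> a < j \<Longrightarrow> a \<noteq> m \<Longrightarrow> F a * Y = Y * F a)
   \<Longrightarrow> F m * Y = - (Y * F m) \<Longrightarrow> X i j * Y = - (Y * X i j)"
proof (induction i j rule: X_induct)
  case (base i) then have "i = m" by simp with base show ?case by (simp add: X_base)
next
  case (step i j)
  show ?case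
  proof (cases "i = m")
    case True
    have c1: "F i * Y = - (Y * F i)" using step True by auto
    have c2: "X (Suc i) j * Y = Y * X (Suc i) j" using step True by (intro LC) auto
    show ?thesis unfolding X_rec[OF step(1)]
      using c1 c2 tl[OF c1] tl[OF c2] by (simp add: nf)
  next
    case False
    have c1: "F i * Y = Y * F i" using step False by auto
    have c2: "X (Suc i) j * Y = - (Y * X (Suc i) j)" using step False by auto
    show ?thesis unfolding X_rec[OF step(1)]
      using c1 c2 tl[OF c1] tl[OF c2] by (simp add: nf)
  qed
qed

lemma L1: "1 \<le> i \<Longrightarrow> i < j \<Longrightarrow> j < k \<Longrightarrow> k < l \<Longrightarrow> l \<le> m+n \<Longrightarrow> X i j * X k l = X k l * X i j"
  by (rule LC) (auto intro!: L0)

lemma IC: "1 \<le> i \<Longrightarrow> i < c \<Longrightarrow> c < j \<Longrightarrow> j \<le> m+n \<Longrightarrow> X i j = X c j * X i c - sm (qidx m c) (X i c * X c j)"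
proof (induction c arbitrary: j)
  case 0 then show ?case by simp
next
  case (Suc c)
  show ?case
  proof (cases "c = i")
    case True then show ?thesis using Suc X_rec[of i j] by (simp add: X_base)
  next
    case False
    then have ic: "i < c" using Suc by simp
    have e1: "X i j = X c j * X i c - sm (qidx m c) (X i c * X c j)" using Suc ic by simp
    have e2: "X c j = X (Suc c) j * F c - sm (qidx m (Suc c)) (F c * X (Suc c) j)" using Suc by (intro X_rec) simp
    have "X i (Suc c) = X c (Suc c) * X i c - sm (qidx m c) (X i c * X c (Suc c))"
      by (rule Suc.IH) (use Suc.prems ic in auto)
    then have e3: "X i (Suc c) = F c * X i c - sm (qidx m c) (X i c * F c)"
      by (simp add: X_base)
    have cm: "X (Suc c) j * X i c = X i c * X (Suc c) j" using Suc ic by (intro L1[symmetric]) auto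
    show ?thesis unfolding e1 e2 e3 using cm tl[OF cm] by (simp add: nf)
  qed
qed


definition S :: "'a \<Rightarrow> 'a \<Rightarrow> 'a" where
  "S v y = v * v * y - sm (qf + inverse qf) (v * y * v) + y * v * v"

lemma serre_S: "serre \<phi> F i j = S (F i) (F j)"
  unfolding serre_def S_def sm_def by simp

lemma S_ext1: "v * A = A * v \<Longrightarrow> S v (A * f - sm x (f * A)) = A * S v f - sm x (S v f * A)"
  unfolding S_def using tl[of v A] by (simp add: nf)

lemma S_ext2: "v * A = A * v \<Longrightarrow> S v (f * A - sm x (A * f)) = S v f * A - sm x (A * S v f)"
  unfolding S_def using tl[of v A] by (simp add: nf)

lemma SE1: "a \<noteq> m \<Longrightarrow> 1 \<le> a \<Longrightarrow> Suc a < j \<Longrightarrow> j \<le> m+n \<Longrightarrow> S (F a) (X (Suc a) j) = 0"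
proof -
  assume h: "a \<noteq> m" "1 \<le> a" "Suc a < j" "j \<le> m+n"
  have s0: "S (F a) (F (Suc a)) = 0" using Fser[of a "Suc a"] h by (simp add: serre_S)
  show ?thesis
  proof (cases "j = Suc (Suc a)")
    case True then show ?thesis using s0 by (simp add: X_base)
  next
    case False
    have c: "F a * X (Suc (Suc a)) j = X (Suc (Suc a)) j * F a" using h False by (intro L0) auto
    show ?thesis using h False
      by (simp add: X_rec[of "Suc a" j] S_ext1[OF c] X_base s0 sm_simps)
  qed
qed

lemma SE2: "b \<noteq> m \<Longrightarrow> 1 \<le> i \<Longrightarrow> i < b \<Longrightarrow> b < m+n \<Longrightarrow> S (F b) (X i b) = 0"
proof -
  assume h: "b \<noteq> m" "1 \<le> i" "i < b" "b < m+n"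
  show ?thesis
  proof (cases "b = Suc i")
    case True then show ?thesis using Fser[of b i] h by (simp add: X_base serre_S)
  next
    case False
    then obtain c where c: "b = Suc c" "i < c" using h by (cases b) auto
    have s0: "S (F b) (F c) = 0" using Fser[of b c] h c by (simp add: serre_S)
    have cm: "F b * X i c = X i c * F b" using h c by (intro L0) auto
    have "X i b = F c * X i c - sm (qidx m c) (X i c * F c)"
      using IC[of i c b] h c by (simp add: X_base)
    then show ?thesis by (simp add: S_ext2[OF cm] s0 sm_simps)
  qed
qed

definition c2 where "c2 = qf + inverse qf"

lemma cancel2: "sm c2 x = 0 \<Longrightarrow> x = 0"
proof -
  assume "sm c2 x = 0"
  then have "sm (inverse c2) (sm c2 x) = 0" by (simp add: sm_simps)
  then have "sm (inverse c2 * c2) x = 0" by (simp only: sm_simps(3))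
  moreover have "inverse c2 * c2 = 1" using qf2_nz unfolding c2_def by simp
  ultimately show "x = 0" by (simp add: sm_simps)
qed

lemma GL: assumes "B * B = 0" "S g B = 0" shows "(B*g - sm qf (g*B)) * (B*g - sm qf (g*B)) = 0"
proof -
  have "S g B * B = 0" "B * S g B = 0" using assms by simp_all
  then have e1: "B*(g*(g*B)) = sm c2 (g*(B*(g*B)))" and e2: "B*(g*(g*B)) = sm c2 (B*(g*(B*g)))"
    unfolding S_def c2_def using assms(1) tl[OF assms(1)] by (simp_all add: nf)
  have "sm c2 (g*(B*(g*B)) - B*(g*(B*g))) = 0" using e1 e2 by (simp add: sm_simps)
  then have e3: "B*(g*(B*g)) = g*(B*(g*B))" using cancel2 by force
  show ?thesis using e1 e3 assms(1) tl[OF assms(1)] unfolding c2_def by (simp add: nf)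
qed

lemma GR: assumes "B * B = 0" "S h B = 0" shows "(h*B - sm (inverse qf) (B*h)) * (h*B - sm (inverse qf) (B*h)) = 0"
proof -
  have "S h B * B = 0" "B * S h B = 0" using assms by simp_all
  then have e1: "B*(h*(h*B)) = sm c2 (h*(B*(h*B)))" and e2: "B*(h*(h*B)) = sm c2 (B*(h*(B*h)))"
    unfolding S_def c2_def using assms(1) tl[OF assms(1)] by (simp_all add: nf)
  have "sm c2 (h*(B*(h*B)) - B*(h*(B*h))) = 0" using e1 e2 by (simp add: sm_simps)
  then have e3: "B*(h*(B*h)) = h*(B*(h*B))" using cancel2 by force
  show ?thesis using e1 e3 assms(1) tl[OF assms(1)] unfolding c2_def by (simp add: nf)
qed

lemma O1m: "m < t \<Longrightarrow> t \<le> m+n \<Longrightarrow> X m t * X m t = 0"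
proof (induction t)
  case 0 then show ?case by simp
next
  case (Suc t)
  show ?case
  proof (cases "t = m")
    case True then show ?thesis by (simp add: X_base Fsq)
  next
    case False
    then have h: "m < t" "t < m+n" using Suc by auto
    have sq: "X m t * X m t = 0" using Suc h by simp
    have "X m (Suc t) = X t (Suc t) * X m t - sm (qidx m t) (X m t * X t (Suc t))"
      using IC[of m t "Suc t"] h mpos by simp
    then have e: "X m (Suc t) = F t * X m t - sm (inverse qf) (X m t * F t)"
      using h by (simp add: X_base qidx_gt)
    have "S (F t) (X m t) = 0" using SE2[of t m] h mpos False by simp
    then show ?thesis unfolding e using GR sq by blast
  qed
qed

lemma O1: assumes "1 \<le> s" "s \<le> m" "m < t" "t \<le> m+n" shows "X s t * X s t = 0"
  using assms(2,1)
proof (induction s rule: inc_induct)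
  case base then show ?case using O1m assms by simp
next
  case (step k)
  have e: "X k t = X (Suc k) t * F k - sm qf (F k * X (Suc k) t)"
    using X_rec[of k t] step assms by (simp add: qidx_le)
  have "S (F k) (X (Suc k) t) = 0" using SE1[of k t] step assms by simp
  moreover have "X (Suc k) t * X (Suc k) t = 0" using step by simp
  ultimately show ?case unfolding e using GL by blast
qed

lemma O2: assumes "1 \<le> i" "i < s" "s \<le> m" "m < k" "k \<le> m+n"
  shows "X s k * X i k = - sm qf (X i k * X s k)"
proof -
  have W2: "X s k * X s k = 0" using O1 assms by simp
  have "i \<le> s - 1" using assms by simp
  then show ?thesis using assms(1)
  proof (induction i rule: inc_induct)
    case base
    have e: "X (s-1) k = X s k * F (s-1) - sm qf (F (s-1) * X s k)"
      using X_rec[of "s-1" k] assms by (simp add: qidx_le)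
    show ?case unfolding e using W2 tl[OF W2] by (simp add: nf)
  next
    case (step j)
    have e: "X j k = X (Suc j) k * F j - sm qf (F j * X (Suc j) k)"
      using X_rec[of j k] step assms by (simp add: qidx_le)
    have c: "F j * X s k = X s k * F j" using step assms by (intro L0) auto
    have ih: "X s k * X (Suc j) k = - sm qf (X (Suc j) k * X s k)" using step by simp
    show ?case unfolding e using c[symmetric] tl[OF c[symmetric]] ih tl[OF ih] by (simp add: nf)
  qed
qed

lemma O3: assumes "1 \<le> s" "s \<le> m" "m < t" "t < k" "k \<le> m+n"
  shows "X s t * X s k = - sm qf (X s k * X s t)"
proof -
  have W2: "X s t * X s t = 0" using O1 assms by simp
  have "Suc t \<le> k" using assms by simp
  then show ?thesis using assms(5)
  proof (induction k rule: dec_induct)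
    case base
    have e: "X s (Suc t) = F t * X s t - sm (inverse qf) (X s t * F t)"
      using IC[of s t "Suc t"] assms base by (simp add: X_base qidx_gt)
    show ?case unfolding e using W2 tl[OF W2] by (simp add: nf)
  next
    case (step j)
    have e: "X s (Suc j) = F j * X s j - sm (inverse qf) (X s j * F j)"
      using IC[of s j "Suc j"] assms step by (simp add: X_base qidx_gt)
    have c: "F j * X s t = X s t * F j" using step assms by (intro L0) auto
    have ih: "X s t * X s j = - sm qf (X s j * X s t)" using step by simp
    show ?case unfolding e using c[symmetric] tl[OF c[symmetric]] ih tl[OF ih] by (simp add: nf)
  qed
qed


lemma core_id:
  fixes u v w :: 'a
  assumes "r = qf \<or> r = inverse qf"
  defines "Z \<equiv> (w*v - sm r (v*w))*u - sm r (u*(w*v - sm r (v*w)))"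
  shows "sm c2 (v*Z - Z*v) = sm c2 (- sm r (S v w * u) + sm r (w * S v u))
     + sm (r*r) (S v w * u - w * S v u - S v u * w + u * S v w)
     + sm (r*r) (v*v*(u*w - w*u) + (w*u - u*w)*v*v)
     + sm (1 + r*r) ((u*w - w*u)*v*v + v*(w*u - u*w)*v)"
  using assms(1) unfolding Z_def S_def c2_def by (auto simp: nf)

lemma core: assumes "u*w = w*u" "S v u = 0" "S v w = 0" "r = qf \<or> r = inverse qf"
  shows "v * ((w*v - sm r (v*w))*u - sm r (u*(w*v - sm r (v*w))))
       = ((w*v - sm r (v*w))*u - sm r (u*(w*v - sm r (v*w)))) * v"
proof -
  have "sm c2 (v * ((w*v - sm r (v*w))*u - sm r (u*(w*v - sm r (v*w))))
       - ((w*v - sm r (v*w))*u - sm r (u*(w*v - sm r (v*w)))) * v) = 0"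
    unfolding core_id[OF assms(4)] using assms(1-3) by (simp add: sm_simps)
  then show ?thesis using cancel2 by force
qed


lemma qidx_cases: "qidx m k = qf \<or> qidx m k = inverse qf" unfolding qidx_def by simp

lemma G6core: assumes "1 \<le> i" "i + 3 \<le> m+n"
  shows "F (Suc i) * X i (i+3) = (if Suc i = m then - (X i (i+3) * F (Suc i)) else X i (i+3) * F (Suc i))"
proof (cases "Suc i = m")
  case True
  then have "Fij \<phi> m F (m-1) (m+2) * F m + F m * Fij \<phi> m F (m-1) (m+2) = 0"
    using assms by (intro Fquart) auto
  moreover have "m - 1 = i" "m + 2 = i + 3" using True by auto
  moreover have "X i (i+3) = Fij \<phi> m F (m-1) (m+2)" by (simp only: calculation(2,3))
  ultimately have "X i (i+3) * F (Suc i) + F (Suc i) * X i (i+3) = 0" using True by simp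
  then show ?thesis using True by (simp add: eq_neg_iff_add_eq_0 add.commute)
next
  case False
  define r where "r = qidx m (Suc i)"
  have r2: "qidx m (Suc (Suc i)) = r" unfolding r_def qidx_def using False by auto
  have e1: "X (Suc i) (i+3) = F (Suc (Suc i)) * F (Suc i) - sm r (F (Suc i) * F (Suc (Suc i)))"
    using X_rec[of "Suc i" "i+3"] r2 by (simp add: X_base numeral_3_eq_3)
  have e2: "X i (i+3) = X (Suc i) (i+3) * F i - sm r (F i * X (Suc i) (i+3))"
    using X_rec[of i "i+3"] r_def by simp
  have uw: "F i * F (Suc (Suc i)) = F (Suc (Suc i)) * F i" using assms by (intro Fcomm) auto
  have su: "S (F (Suc i)) (F i) = 0" using Fser[of "Suc i" i] assms False by (simp add: serre_S)
  have sw: "S (F (Suc i)) (F (Suc (Suc i))) = 0" using Fser[of "Suc i" "Suc (Suc i)"] assms False by (simp add: serre_S)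
  have rc: "r = qf \<or> r = inverse qf" unfolding r_def by (rule qidx_cases)
  show ?thesis unfolding e2 e1 using core[OF uw su sw rc] False by simp
qed

lemma G6a: assumes "1 \<le> i" "i < a" "a + 2 \<le> m+n"
  shows "F a * X i (a+2) = (if a = m then - (X i (a+2) * F a) else X i (a+2) * F a)"
proof -
  have "i \<le> a - 1" using assms by simp
  then show ?thesis using assms(1)
  proof (induction i rule: inc_induct)
    case base
    have "F (Suc (a-1)) * X (a-1) ((a-1)+3) = (if Suc (a-1) = m then - (X (a-1) ((a-1)+3) * F (Suc (a-1))) else X (a-1) ((a-1)+3) * F (Suc (a-1)))"
      using assms by (intro G6core) auto
    moreover have "Suc (a-1) = a" "(a-1)+3 = a+2" using assms by auto
    ultimately show ?case by simp
  next
    case (step k)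
    have e: "X k (a+2) = X (Suc k) (a+2) * F k - sm (qidx m (Suc k)) (F k * X (Suc k) (a+2))"
      using X_rec[of k "a+2"] step by simp
    have c: "F a * F k = F k * F a" using step assms by (intro Fcomm) auto
    have ih: "F a * X (Suc k) (a+2) = (if a = m then - (X (Suc k) (a+2) * F a) else X (Suc k) (a+2) * F a)"
      using step by simp
    show ?case
    proof (cases "a = m")
      case True
      then have ih': "F a * X (Suc k) (a+2) = - (X (Suc k) (a+2) * F a)" using ih by simp
      show ?thesis unfolding e using True c tl[OF c] ih' tl[OF ih'] by (simp add: nf)
    next
      case False
      then have ih': "F a * X (Suc k) (a+2) = X (Suc k) (a+2) * F a" using ih by simp
      show ?thesis unfolding e using False c tl[OF c] ih' tl[OF ih'] by (simp add: nf)
    qed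
  qed
qed

lemma G6: assumes "1 \<le> i" "i < a" "Suc a < j" "j \<le> m+n"
  shows "F a * X i j = (if a = m then - (X i j * F a) else X i j * F a)"
proof -
  have "a + 2 \<le> j" using assms by simp
  then show ?thesis using assms(4)
  proof (induction j rule: dec_induct)
    case base then show ?case using G6a assms by simp
  next
    case (step k)
    have e: "X i (Suc k) = F k * X i k - sm (qidx m k) (X i k * F k)"
      using IC[of i k "Suc k"] assms step by (simp add: X_base)
    have c: "F a * F k = F k * F a" using step assms by (intro Fcomm) auto
    have ih: "F a * X i k = (if a = m then - (X i k * F a) else X i k * F a)"
      using step by simp
    show ?case
    proof (cases "a = m")
      case True
      then have ih': "F a * X i k = - (X i k * F a)" using ih by simp
      show ?thesis unfolding e using True c tl[OF c] ih' tl[OF ih'] by (simp add: nf)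
    next
      case False
      then have ih': "F a * X i k = X i k * F a" using ih by simp
      show ?thesis unfolding e using False c tl[OF c] ih' tl[OF ih'] by (simp add: nf)
    qed
  qed
qed

lemma O4: assumes "1 \<le> i" "i < s" "s \<le> m" "m < t" "t < k" "k \<le> m+n"
  shows "X s t * X i k = - (X i k * X s t)"
proof (rule LN)
  show "s < t" "s \<le> m" "m < t" using assms by auto
  show "F a * X i k = X i k * F a" if "s \<le> a" "a < t" "a \<noteq> m" for a
    using G6[of i a k] that assms by simp
  show "F m * X i k = - (X i k * F m)" using G6[of i m k] assms by simp
qed

lemma block: assumes "A = B*g - sm qf (g*B)" "C = D*g - sm qf (g*D)" "B*D = - sm qf (D*B)" "B*C = -(C*B)"
  shows "A*D = -(D*A) - sm (qf - inverse qf) (C*B)"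
proof -
  have h: "B*C + sm qf (sm qf (C*B)) = - sm qf (D*A) - sm qf (A*D)"
    unfolding assms(1,2) using tl[OF assms(3)] assms(3) by (simp add: nf)
  have h2: "sm qf (A*D) = C*B - sm qf (sm qf (C*B)) - sm qf (D*A)"
    using h assms(4) by (simp add: algebra_simps)
  have "A*D = sm (inverse qf) (sm qf (A*D))" by (simp add: nf)
  also have "\<dots> = -(D*A) - sm (qf - inverse qf) (C*B)" unfolding h2 by (simp add: nf)
  finally show ?thesis .
qed


lemma O5: assumes "1 \<le> s" "s < i" "i \<le> m" "m < t" "t < k" "k \<le> m+n"
  shows "X s t * X i k = -(X i k * X s t) - sm (qf - inverse qf) (X s k * X i t)"
proof -
  define s0 where "s0 = i - 1"
  have s0: "Suc s0 = i" "1 \<le> s0" using assms unfolding s0_def by auto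
  have base: "X s0 t * X i (Suc t) = -(X i (Suc t) * X s0 t) - sm (qf - inverse qf) (X s0 (Suc t) * X i t)"
  proof (rule block)
    show "X s0 t = X i t * F s0 - sm qf (F s0 * X i t)"
      using X_rec[of s0 t] s0 assms by (simp add: qidx_le)
    show "X s0 (Suc t) = X i (Suc t) * F s0 - sm qf (F s0 * X i (Suc t))"
      using X_rec[of s0 "Suc t"] s0 assms by (simp add: qidx_le)
    show "X i t * X i (Suc t) = - sm qf (X i (Suc t) * X i t)"
      using O3[of i t "Suc t"] s0 assms by simp
    show "X i t * X s0 (Suc t) = - (X s0 (Suc t) * X i t)"
      using O4[of s0 i t "Suc t"] s0 assms by simp
  qed
  have right: "X s0 t * X i k = -(X i k * X s0 t) - sm (qf - inverse qf) (X s0 k * X i t)"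
  proof -
    have "Suc t \<le> k" using assms by simp
    then show ?thesis using assms(6)
    proof (induction k rule: dec_induct)
      case base then show ?case using \<open>X s0 t * X i (Suc t) = _\<close> by simp
    next
      case (step j)
      have e1: "X i (Suc j) = F j * X i j - sm (inverse qf) (X i j * F j)"
        using IC[of i j "Suc j"] assms step by (simp add: X_base qidx_gt)
      have e2: "X s0 (Suc j) = F j * X s0 j - sm (inverse qf) (X s0 j * F j)"
        using IC[of s0 j "Suc j"] assms step s0 by (simp add: X_base qidx_gt)
      have c1: "F j * X s0 t = X s0 t * F j" using step assms s0 by (intro L0) auto
      have c2: "F j * X i t = X i t * F j" using step assms s0 by (intro L0) auto
      have ih: "X s0 t * X i j = -(X i j * X s0 t) - sm (qf - inverse qf) (X s0 j * X i t)"
        using step by simp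
      show ?case unfolding e1 e2 by (simp add: nf c1[symmetric] tl[OF c1[symmetric]] c2[symmetric] tl[OF c2[symmetric]]
          ih tl[OF ih])
    qed
  qed
  have "s \<le> s0" using assms s0 by simp
  then show ?thesis using assms(1)
  proof (induction s rule: inc_induct)
    case base then show ?case using right by simp
  next
    case (step j)
    have e1: "X j t = X (Suc j) t * F j - sm qf (F j * X (Suc j) t)"
      using X_rec[of j t] step s0 assms by (simp add: qidx_le)
    have e2: "X j k = X (Suc j) k * F j - sm qf (F j * X (Suc j) k)"
      using X_rec[of j k] step s0 assms by (simp add: qidx_le)
    have c1: "F j * X i k = X i k * F j" using step assms s0 by (intro L0) auto
    have c2: "F j * X i t = X i t * F j" using step assms s0 by (intro L0) auto
    have ih: "X (Suc j) t * X i k = -(X i k * X (Suc j) t) - sm (qf - inverse qf) (X (Suc j) k * X i t)"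
      using step by simp
    show ?case unfolding e1 e2 by (simp add: nf c1 tl[OF c1] c2 tl[OF c2]
        ih tl[OF ih])
  qed
qed

lemma sm_neg: "sm (- c) x = - sm c x" unfolding sm_def by (simp add: phi_minus)

lemma key: assumes "(i,k) \<in> I1 m n" "(s,t) \<in> I1 m n" "prec (i,k) (s,t)"
  shows "\<exists>c Z u v. X s t * X i k = sm c (X i k * X s t) + Z * X u v \<and> (u,v) \<in> I1 m n \<and> prec (i,k) (u,v)"
proof -
  have h: "1 \<le> i" "i \<le> m" "m < k" "k \<le> m+n" "1 \<le> s" "s \<le> m" "m < t" "t \<le> m+n"
    using assms(1,2) unfolding I1_def by auto
  have p: "t < k \<or> (t = k \<and> i < s)" using assms(3) unfolding prec_def by auto
  consider "t = k" "i < s" | "t < k" "s = i" | "t < k" "i < s" | "t < k" "s < i" using p by linarith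
  then show ?thesis
  proof cases
    case 1
    have "X s t * X i k = sm (- qf) (X i k * X s t) + 0 * X s t"
      using O2[of i s k] h 1 by (simp add: sm_neg)
    then show ?thesis using assms by blast
  next
    case 2
    have "X s t * X i k = sm (- qf) (X i k * X s t) + 0 * X s t"
      using O3[of i t k] h 2 by (simp add: sm_neg)
    then show ?thesis using assms by blast
  next
    case 3
    have "X s t * X i k = sm (- 1) (X i k * X s t) + 0 * X s t"
      using O4[of i s t k] h 3 by (simp add: sm_m1)
    then show ?thesis using assms by blast
  next
    case 4
    have "X s t * X i k = sm (- 1) (X i k * X s t) + (- sm (qf - inverse qf) (X s k)) * X i t"
      using O5[of s i t k] h 4 by (simp add: sm_m1 nf)
    moreover have "(i,t) \<in> I1 m n" "prec (i,k) (i,t)" using h 4 unfolding I1_def prec_def by auto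
    ultimately show ?thesis by blast
  qed
qed

lemma prec_irrefl: "\<not> prec a a" unfolding prec_def by auto
lemma prec_asym: "prec a b \<Longrightarrow> \<not> prec b a" unfolding prec_def by auto

lemma I1_list_set: "set (I1_list m n) = I1 m n"
  unfolding I1_list_def I1_def by (auto simp: image_iff)

lemma sorted_cols: "sorted_wrt (>) js \<Longrightarrow> sorted_wrt prec (concat (map (\<lambda>j. map (\<lambda>i. (i, j)) [1..<Suc m]) js))"
proof (induction js)
  case Nil then show ?case by simp
next
  case (Cons j js)
  have "sorted_wrt prec (map (\<lambda>i. (i, j)) [1..<Suc m])"
    by (simp add: sorted_wrt_map prec_def del: upt_Suc)
  moreover have "\<forall>x\<in>set (map (\<lambda>i. (i, j)) [1..<Suc m]). \<forall>y\<in>set (concat (map (\<lambda>j. map (\<lambda>i. (i, j)) [1..<Suc m]) js)). prec x y"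
    using Cons.prems by (auto simp: prec_def)
  moreover have "sorted_wrt prec (concat (map (\<lambda>j. map (\<lambda>i. (i, j)) [1..<Suc m]) js))"
    using Cons by simp
  ultimately show ?case by (simp add: sorted_wrt_append del: upt_Suc)
qed

lemma I1_list_sorted: "sorted_wrt prec (I1_list m n)"
  unfolding I1_list_def by (rule sorted_cols) (simp add: sorted_wrt_rev del: upt_Suc)

lemma suffix: "I1_list m n = xs @ ys \<Longrightarrow> r \<in> set ys \<Longrightarrow> X (fst r) (snd r) * prod_list (map (\<lambda>(i,j). X i j) ys) = 0"
proof (induction ys arbitrary: xs r)
  case Nil then show ?case by simp
next
  case (Cons p rest)
  have srt: "sorted_wrt prec (xs @ p # rest)" using I1_list_sorted Cons.prems by metis
  then have before: "\<forall>x\<in>set xs. prec x p" and after: "\<forall>y\<in>set rest. prec p y"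
    by (auto simp: sorted_wrt_append)
  have pI: "p \<in> I1 m n" using Cons.prems I1_list_set by (metis in_set_conv_decomp)
  have IH: "\<And>r. r \<in> set rest \<Longrightarrow> X (fst r) (snd r) * prod_list (map (\<lambda>(i,j). X i j) rest) = 0"
    using Cons.IH[of "xs @ [p]"] Cons.prems by simp
  obtain a b where ab: "p = (a,b)" by (cases p)
  define P where "P = prod_list (map (\<lambda>(i,j). X i j) rest)"
  have prodc: "prod_list (map (\<lambda>(i,j). X i j) (p # rest)) = X a b * P" unfolding P_def ab by simp
  show ?case
  proof (cases "r = p")
    case True
    have "X a b * X a b = 0" using pI ab by (intro O1) (auto simp: I1_def)
    then show ?thesis unfolding prodc using True ab tl by (simp add: mult.assoc[symmetric])
  next
    case False
    then have rr: "r \<in> set rest" using Cons.prems by simp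
    obtain s t where st: "r = (s,t)" by (cases r)
    have rI: "r \<in> I1 m n" using Cons.prems I1_list_set rr by auto
    have pr: "prec (a,b) (s,t)" using after rr ab st by auto
    obtain c Z u v where kk: "X s t * X a b = sm c (X a b * X s t) + Z * X u v"
      and uI: "(u,v) \<in> I1 m n" and pu: "prec (a,b) (u,v)"
      using key[of a b s t] pI rI ab st pr by blast
    have "(u,v) \<in> set (I1_list m n)" using uI I1_list_set by simp
    moreover have "(u,v) \<notin> set xs" using before pu prec_asym ab by blast
    moreover have "(u,v) \<noteq> p" using pu ab prec_irrefl by blast
    ultimately have "(u,v) \<in> set rest" using Cons.prems by auto
    then have z1: "X u v * P = 0" unfolding P_def using IH by fastforce
    have z2: "X s t * P = 0" unfolding P_def using IH rr st by fastforce
    have "X s t * (X a b * P) = (X s t * X a b) * P" by (simp add: mult.assoc)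
    also have "\<dots> = sm c (X a b * (X s t * P)) + Z * (X u v * P)" unfolding kk by (simp add: nf)
    also have "\<dots> = 0" using z1 z2 by (simp add: sm_simps)
    finally show ?thesis unfolding prodc using st by simp
  qed
qed

end

theorem lemma5p2:
  fixes \<phi> :: "cq \<Rightarrow> 'a::ring_1" and K Ki E F :: "nat \<Rightarrow> 'a" and m n i k :: nat
  assumes "1 \<le> m" and "1 \<le> n"
    and "central_hom \<phi>"
    and "Uq_rels m n \<phi> K Ki E F"
    and "(i, k) \<in> I1 m n"
  shows "(\<forall>(s, t)\<in>I1 m n. preceq (i, k) (s, t) \<longrightarrow> Fij \<phi> m F s t * Fge m n \<phi> F (i, k) = 0)
       \<and> (\<forall>(s, t)\<in>I1 m n. prec (i, k) (s, t) \<longrightarrow> Fij \<phi> m F s t * Fgt m n \<phi> F (i, k) = 0)"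
proof -
  interpret Fsys \<phi> m n F
  proof
    show "central_hom \<phi>" "1 \<le> m" "1 \<le> n" using assms by auto
    show "F m * F m = 0" using assms(4) unfolding Uq_rels_def by blast
    show "F i * F j = F j * F i" if "1 \<le> i" "i < m+n" "1 \<le> j" "j < m+n" "Suc i < j" for i j
      using assms(4) that unfolding Uq_rels_def by auto
    show "serre \<phi> F i j = 0" if "1 \<le> i" "i < m+n" "1 \<le> j" "j < m+n" "j = Suc i \<or> i = Suc j" "i \<noteq> m" for i j
      using assms(4) that unfolding Uq_rels_def by auto
    show "Fij \<phi> m F (m-1) (m+2) * F m + F m * Fij \<phi> m F (m-1) (m+2) = 0" if "2 \<le> m" "2 \<le> n"
      using assms(4) that unfolding Uq_rels_def by auto
  qed
  define p where "p = (i,k)"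
  have "p \<in> set (I1_list m n)" using assms(5) I1_list_set p_def by simp
  then obtain xs ys where L: "I1_list m n = xs @ p # ys" by (meson split_list)
  have srt: "sorted_wrt prec (xs @ p # ys)" using I1_list_sorted L by metis
  then have before: "\<forall>x\<in>set xs. prec x p" and after: "\<forall>y\<in>set ys. prec p y"
    by (auto simp: sorted_wrt_append)
  have setL: "set (xs @ p # ys) = I1 m n" using I1_list_set L by metis
  have fxs1: "filter (\<lambda>r. r \<in> {r \<in> I1 m n. preceq p r}) xs = []"
    using before prec_asym prec_irrefl unfolding preceq_def by (auto simp: filter_empty_conv)
  have fxs2: "filter (\<lambda>r. r \<in> {r \<in> I1 m n. prec p r}) xs = []"
    using before prec_asym unfolding preceq_def by (auto simp: filter_empty_conv)
  have fys1: "filter (\<lambda>r. r \<in> {r \<in> I1 m n. preceq p r}) ys = ys"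
    using after setL unfolding preceq_def by (auto simp: filter_id_conv)
  have fys2: "filter (\<lambda>r. r \<in> {r \<in> I1 m n. prec p r}) ys = ys"
    using after setL by (auto simp: filter_id_conv)
  have pI: "p \<in> I1 m n" using assms(5) p_def by simp
  have Fge: "Fge m n \<phi> F p = prod_list (map (\<lambda>(i,j). X i j) (p # ys))"
    unfolding Fge_def FI_def L using fxs1 fys1 pI by (simp add: preceq_def)
  have Fgt: "Fgt m n \<phi> F p = prod_list (map (\<lambda>(i,j). X i j) ys)"
    unfolding Fgt_def FI_def L using fxs2 fys2 pI by (simp add: prec_irrefl)
  show ?thesis
  proof (intro conjI ballI impI; clarify)
    fix s t assume st: "(s,t) \<in> I1 m n" "preceq (i,k) (s,t)"
    have "(s,t) \<notin> set xs" using before st prec_asym prec_irrefl unfolding p_def preceq_def by blast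
    then have "(s,t) \<in> set (p # ys)" using setL st(1) by auto
    then show "X s t * Fge m n \<phi> F (i,k) = 0"
      using suffix[OF L] unfolding Fge[unfolded p_def] p_def by fastforce
  next
    fix s t assume st: "(s,t) \<in> I1 m n" "prec (i,k) (s,t)"
    have "(s,t) \<notin> set xs" using before st prec_asym unfolding p_def by blast
    moreover have "(s,t) \<noteq> p" using st prec_irrefl unfolding p_def by blast
    ultimately have "(s,t) \<in> set ys" using setL st(1) by auto
    then show "X s t * Fgt m n \<phi> F (i,k) = 0"
      using suffix[of "xs @ [p]" ys] L unfolding Fgt[unfolded p_def] p_def by fastforce
  qed
qed

end
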